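(* Fix a set $A$, a set $V(A)$ of "objects", a binary relation $\trianglelefteq$ on objects, and a binary relation $\sqsubset$ on objects (with reflexive closure $\sqsubseteq$) satisfying: (i) if $x \trianglelefteq y$ and $y \sqsubset z$ then $x \trianglelefteq z$; (ii) $\sqsubset$ is well-founded on $V(A)$, i.e., there is no sequence $f$ with $f(i)\in V(A)$ and $f(i+1)\sqsubset f(i)$ for all $i$; (iii) $\sqsubset$ is transitive; (iv) if $x \sqsubset y$ and $y \in V(A)$ then $x \in V(A)$. Let $f:\mathbb{N}\to$ objects with $f(0)\in V(A)$ and $f$ bad w.r.t. $\trianglelefteq$. Then there exists a sequence $g$ such that for every $i$ there is $j$ with $g(i)\sqsubseteq f(j)$, $g$ is minimal at $0$, and $g$ is bad w.r.t. $\trianglelefteq$.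
   Context: Sequences are functions $\mathbb{N}\to$ objects. A sequence $h$ is good w.r.t. $\trianglelefteq$ if there are $i<j$ with $h(i)\trianglelefteq h(j)$, and bad otherwise. A sequence $f$ is minimal at $n$ if for every sequence $g$ such that $g(i)=f(i)$ for all $i<n$, $g(n)\sqsubset f(n)$, and for every $i\ge n$ there exists $j\ge n$ with $g(i)\sqsubseteq f(j)$, the sequence $g$ is good w.r.t. $\trianglelefteq$. *)

theory Defs
  imports Main
begin

definition good :: "('a \<Rightarrow> 'a \<Rightarrow> bool) \<Rightarrow> (nat \<Rightarrow> 'a) \<Rightarrow> bool" where
  "good P h \<longleftrightarrow> (\<exists>i j. i < j \<and> P (h i) (h j))"

definition bad :: "('a \<Rightarrow> 'a \<Rightarrow> bool) \<Rightarrow> (nat \<Rightarrow> 'a) \<Rightarrow> bool" where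
  "bad P h \<longleftrightarrow> \<not> good P h"

definition reflc :: "('a \<Rightarrow> 'a \<Rightarrow> bool) \<Rightarrow> 'a \<Rightarrow> 'a \<Rightarrow> bool" where
  "reflc sq x y \<longleftrightarrow> sq x y \<or> x = y"

definition minimal_at ::
  "('a \<Rightarrow> 'a \<Rightarrow> bool) \<Rightarrow> ('a \<Rightarrow> 'a \<Rightarrow> bool) \<Rightarrow> (nat \<Rightarrow> 'a) \<Rightarrow> nat \<Rightarrow> bool" where
  "minimal_at P sq f n \<longleftrightarrow>
     (\<forall>g. (\<forall>i<n. g i = f i) \<and> sq (g n) (f n) \<and>
          (\<forall>i\<ge>n. \<exists>j\<ge>n. reflc sq (g i) (f j)) \<longrightarrow> good P g)"

end

theory Submission
  imports Defs
begin

theorem lemma5: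
  fixes A :: "'b set" and V :: "'b set \<Rightarrow> 'a set"
    and P :: "'a \<Rightarrow> 'a \<Rightarrow> bool" and sq :: "'a \<Rightarrow> 'a \<Rightarrow> bool"
    and f :: "nat \<Rightarrow> 'a"
  assumes mono: "\<And>x y z. P x y \<Longrightarrow> sq y z \<Longrightarrow> P x z"
    and wf: "\<not> (\<exists>h. \<forall>i. h i \<in> V A \<and> sq (h (Suc i)) (h i))"
    and trans: "\<And>x y z. sq x y \<Longrightarrow> sq y z \<Longrightarrow> sq x z"
    and down: "\<And>x y. sq x y \<Longrightarrow> y \<in> V A \<Longrightarrow> x \<in> V A"
    and f0: "f 0 \<in> V A"
    and fbad: "bad P f"
  shows "\<exists>g. (\<forall>i. \<exists>j. reflc sq (g i) (f j)) \<and> minimal_at P sq g 0 \<and> bad P g"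
proof -
  define r where "r = {(x,y). sq x y \<and> x \<in> V A \<and> y \<in> V A}"
  have wfr: "wf r"
    unfolding wf_iff_no_infinite_down_chain
  proof
    assume "\<exists>h. \<forall>i. (h (Suc i), h i) \<in> r"
    then obtain h where "\<forall>i. (h (Suc i), h i) \<in> r" by blast
    hence "\<forall>i. h i \<in> V A \<and> sq (h (Suc i)) (h i)" unfolding r_def by auto
    thus False using wf by blast
  qed
  define S where "S = {x \<in> V A. \<exists>h. bad P h \<and> h 0 = x \<and> (\<forall>i. \<exists>j. reflc sq (h i) (f j))}"
  have "f 0 \<in> S" unfolding S_def using f0 fbad by (auto simp: reflc_def)
  then obtain z where zS: "z \<in> S" and zmin: "\<And>y. (y,z) \<in> r \<Longrightarrow> y \<notin> S"
    using wfr unfolding wf_eq_minimal by metis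
  from zS obtain g where gb: "bad P g" and g0: "g 0 = z" and gf: "\<forall>i. \<exists>j. reflc sq (g i) (f j)"
    and zV: "z \<in> V A" unfolding S_def by blast
  have "minimal_at P sq g 0"
    unfolding minimal_at_def
  proof (intro allI impI)
    fix h assume H: "(\<forall>i<0. h i = g i) \<and> sq (h 0) (g 0) \<and> (\<forall>i\<ge>0. \<exists>j\<ge>0. reflc sq (h i) (g j))"
    show "good P h"
    proof (rule ccontr)
      assume ng: "\<not> good P h"
      have hf: "\<forall>i. \<exists>j. reflc sq (h i) (f j)"
      proof
        fix i
        obtain j where "reflc sq (h i) (g j)" using H by blast
        moreover obtain k where "reflc sq (g j) (f k)" using gf by blast
        ultimately have "reflc sq (h i) (f k)" unfolding reflc_def using trans by metis
        thus "\<exists>j. reflc sq (h i) (f j)" by blast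
      qed
      have hV: "h 0 \<in> V A" using down H g0 zV by blast
      hence "h 0 \<in> S" unfolding S_def using ng hf by (auto simp: bad_def)
      moreover have "(h 0, z) \<in> r" unfolding r_def using H g0 hV zV by auto
      ultimately show False using zmin by blast
    qed
  qed
  thus ?thesis using gb gf by blast
qed

end
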